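(* The embedding functor $i_{\mathrm{tffr}}\colon\mathcal R\hookrightarrow\mathfrak{sl}(2)\text{-}\mathrm{Mod}_{\mathrm{tffr}}$ is a right adjoint of the rationalization functor $F_{\mathrm{rat}}\colon\mathfrak{sl}(2)\text{-}\mathrm{Mod}_{\mathrm{tffr}}\to\mathcal R$. Therefore $\mathcal R$ is a reflective localization of $\mathfrak{sl}(2)\text{-}\mathrm{Mod}_{\mathrm{tffr}}$ with localization functor $F_{\mathrm{rat}}$. Moreover, $F_{\mathrm{rat}}$ is faithful.
   Context: $\mathfrak{sl}(2)$ has basis $L_{-1}=f$, $L_0=-\tfrac12 h$, $L_1=-e$ for a Chevalley basis $e,f,h$. Every $\mathfrak{sl}(2)$-module $(V,\rho)$ is a $\mathbb{C}[z]$-module via $z\cdot v=\rho(L_0)v$. $\mathfrak{sl}(2)\text{-}\mathrm{Mod}_{\mathrm{tffr}}$ is the full subcategory of $\mathfrak{sl}(2)$-modules that are torsion free as $\mathbb{C}[z]$-modules and of finite rank ($S^{-1}V$ finite-dimensional over $\mathbb{C}(z)$, $S=\mathbb{C}[z]\setminus\{0\}$). $\mathcal R$ is its full subcategory of rational modules, i.e. those which with their $\mathbb{C}[z]$-structure are finite-dimensional $\mathbb{C}(z)$-vector spaces. The rationalization functor sends $(V,\rho)$ to $(S^{-1}V,\rho_{\mathrm{rat}})$ with $\rho_{\mathrm{rat}}(L_{\pm1})(v/p(z))=\rho(L_{\pm1})(v)/p(z\pm1)$ and $\rho_{\mathrm{rat}}(L_0)(v/p(z))=zv/p(z)$, and a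 morphism $\phi$ to $S^{-1}\phi$. *)

theory Defs
  imports "HOL-Algebra.Module" "HOL-Computational_Algebra.Polynomial"
begin

definition Cring :: "complex ring" where
  "Cring = \<lparr>carrier = UNIV, monoid.mult = (*), monoid.one = 1, zero = 0, add = (+)\<rparr>"

text \<open>A complex vector space (HOL-Algebra module over Cring) together with the
  action of the basis L_{-1} = f, L_0 = -h/2, L_1 = -e of sl(2):
  fields Lm = rho(L_{-1}), Lz = rho(L_0), Lp = rho(L_1).\<close>

record 'b sl2mod = "(complex, 'b) module" +
  Lm :: "'b \<Rightarrow> 'b"
  Lz :: "'b \<Rightarrow> 'b"
  Lp :: "'b \<Rightarrow> 'b"

definition lin_map :: "(complex, 'b, 'm) module_scheme \<Rightarrow> (complex, 'c, 'n) module_scheme \<Rightarrow> ('b \<Rightarrow> 'c) \<Rightarrow> bool" where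
  "lin_map M N f \<longleftrightarrow> f \<in> carrier M \<rightarrow> carrier N \<and>
     (\<forall>x\<in>carrier M. \<forall>y\<in>carrier M. f (x \<oplus>\<^bsub>M\<^esub> y) = f x \<oplus>\<^bsub>N\<^esub> f y) \<and>
     (\<forall>c. \<forall>x\<in>carrier M. f (c \<odot>\<^bsub>M\<^esub> x) = c \<odot>\<^bsub>N\<^esub> f x)"

text \<open>Lie algebra representation: the three operators are linear and satisfy
  [L_m, L_n] = (m - n) L_{m+n}, i.e. [L_1,L_{-1}] = 2 L_0, [L_0,L_1] = -L_1,
  [L_0,L_{-1}] = L_{-1} (equivalently [h,e]=2e, [h,f]=-2f, [e,f]=h).\<close>

definition sl2_module :: "'b sl2mod \<Rightarrow> bool" where
  "sl2_module M \<longleftrightarrow> Module.module Cring M \<and>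
     lin_map M M (Lm M) \<and> lin_map M M (Lz M) \<and> lin_map M M (Lp M) \<and>
     (\<forall>v\<in>carrier M.
        Lp M (Lm M v) \<ominus>\<^bsub>M\<^esub> Lm M (Lp M v) = (2::complex) \<odot>\<^bsub>M\<^esub> Lz M v \<and>
        Lz M (Lp M v) \<ominus>\<^bsub>M\<^esub> Lp M (Lz M v) = \<ominus>\<^bsub>M\<^esub> Lp M v \<and>
        Lz M (Lm M v) \<ominus>\<^bsub>M\<^esub> Lm M (Lz M v) = Lm M v)"

definition sl2_hom :: "'b sl2mod \<Rightarrow> 'c sl2mod \<Rightarrow> ('b \<Rightarrow> 'c) \<Rightarrow> bool" where
  "sl2_hom M N f \<longleftrightarrow> lin_map M N f \<and>
     (\<forall>v\<in>carrier M. f (Lm M v) = Lm N (f v) \<and> f (Lz M v) = Lz N (f v) \<and>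
                      f (Lp M v) = Lp N (f v))"

fun pact_list :: "'b sl2mod \<Rightarrow> complex list \<Rightarrow> 'b \<Rightarrow> 'b" where
  "pact_list M [] v = \<zero>\<^bsub>M\<^esub>"
| "pact_list M (c # cs) v = c \<odot>\<^bsub>M\<^esub> v \<oplus>\<^bsub>M\<^esub> Lz M (pact_list M cs v)"

text \<open>pact M p v = p(rho(L_0)) v  (Horner evaluation).\<close>
definition pact :: "'b sl2mod \<Rightarrow> complex poly \<Rightarrow> 'b \<Rightarrow> 'b" where
  "pact M p v = pact_list M (coeffs p) v"

definition torsion_free :: "'b sl2mod \<Rightarrow> bool" where
  "torsion_free M \<longleftrightarrow> (\<forall>p. p \<noteq> 0 \<longrightarrow> (\<forall>v\<in>carrier M. pact M p v = \<zero>\<^bsub>M\<^esub> \<longrightarrow> v = \<zero>\<^bsub>M\<^esub>))"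

definition pspan :: "'b sl2mod \<Rightarrow> 'b set \<Rightarrow> 'b set" where
  "pspan M B = {finsum M (\<lambda>b. pact M (c b) b) B | c. True}"

text \<open>Finite rank: S^{-1}V is finite dimensional over C(z), i.e. spanned over C(z)
  by finitely many fractions; clearing denominators, by finitely many v/1.\<close>
definition finite_rank :: "'b sl2mod \<Rightarrow> bool" where
  "finite_rank M \<longleftrightarrow> (\<exists>B. finite B \<and> B \<subseteq> carrier M \<and>
      (\<forall>v\<in>carrier M. \<exists>s. s \<noteq> 0 \<and> pact M s v \<in> pspan M B))"

definition tffr :: "'b sl2mod \<Rightarrow> bool" where
  "tffr M \<longleftrightarrow> sl2_module M \<and> torsion_free M \<and> finite_rank M"

text \<open>Objects of R: every nonzero polynomial in z acts bijectively, so the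
  C[z]-structure is a (finite dimensional) C(z)-vector space structure.\<close>
definition rational :: "'b sl2mod \<Rightarrow> bool" where
  "rational M \<longleftrightarrow> tffr M \<and> (\<forall>p. p \<noteq> 0 \<longrightarrow> bij_betw (pact M p) (carrier M) (carrier M))"

definition frac_rel :: "'b sl2mod \<Rightarrow> (('b \<times> complex poly) \<times> ('b \<times> complex poly)) set" where
  "frac_rel M = {((v, p), (w, q)). v \<in> carrier M \<and> w \<in> carrier M \<and> p \<noteq> 0 \<and> q \<noteq> 0 \<and>
       (\<exists>s. s \<noteq> 0 \<and> pact M s (pact M q v \<ominus>\<^bsub>M\<^esub> pact M p w) = \<zero>\<^bsub>M\<^esub>)}"

definition frac :: "'b sl2mod \<Rightarrow> 'b \<Rightarrow> complex poly \<Rightarrow> ('b \<times> complex poly) set" where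
  "frac M v p = frac_rel M `` {(v, p)}"

definition rep :: "('b \<times> complex poly) set \<Rightarrow> 'b \<times> complex poly" where
  "rep X = (SOME vp. vp \<in> X)"

definition Frat :: "'b sl2mod \<Rightarrow> ('b \<times> complex poly) set sl2mod" where
  "Frat M = \<lparr>carrier = {frac M v p | v p. v \<in> carrier M \<and> p \<noteq> 0},
     monoid.mult = (\<lambda>_ _. frac M \<zero>\<^bsub>M\<^esub> 1), monoid.one = frac M \<zero>\<^bsub>M\<^esub> 1,
     zero = frac M \<zero>\<^bsub>M\<^esub> 1,
     add = (\<lambda>X Y. case rep X of (v, p) \<Rightarrow> case rep Y of (w, q) \<Rightarrow>
              frac M (pact M q v \<oplus>\<^bsub>M\<^esub> pact M p w) (p * q)),
     module.smult = (\<lambda>c X. case rep X of (v, p) \<Rightarrow> frac M (c \<odot>\<^bsub>M\<^esub> v) p),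
     Lm = (\<lambda>X. case rep X of (v, p) \<Rightarrow> frac M (Lm M v) (pcompose p [:-1, 1:])),
     Lz = (\<lambda>X. case rep X of (v, p) \<Rightarrow> frac M (Lz M v) p),
     Lp = (\<lambda>X. case rep X of (v, p) \<Rightarrow> frac M (Lp M v) (pcompose p [:1, 1:]))\<rparr>"

definition Fmor :: "'b sl2mod \<Rightarrow> 'c sl2mod \<Rightarrow> ('b \<Rightarrow> 'c) \<Rightarrow> ('b \<times> complex poly) set \<Rightarrow> ('c \<times> complex poly) set" where
  "Fmor M N f X = (case rep X of (v, p) \<Rightarrow> frac N (f v) p)"

text \<open>The canonical map V \<rightarrow> S^{-1}V, v \<mapsto> v/1 (unit of the adjunction).\<close>
definition eta :: "'b sl2mod \<Rightarrow> 'b \<Rightarrow> ('b \<times> complex poly) set" where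
  "eta M v = frac M v 1"

end

theory Submission imports Defs begin

lemma Cring_simps [simp]: "carrier Cring = UNIV" "(\<otimes>\<^bsub>Cring\<^esub>) = (*)" "(\<oplus>\<^bsub>Cring\<^esub>) = (+)"
  "\<one>\<^bsub>Cring\<^esub> = 1" "\<zero>\<^bsub>Cring\<^esub> = 0"
  by (simp_all add: Cring_def)

lemma cring_Cring: "cring Cring"
  apply (rule cringI)
    apply (rule abelian_groupI, simp_all add: algebra_simps)
   apply (metis add.right_inverse)
  apply (rule comm_monoidI, simp_all add: algebra_simps)
  done

lemma Cring_minus [simp]: "\<ominus>\<^bsub>Cring\<^esub> a = - a"
proof -
  interpret cring Cring by (rule cring_Cring)
  show ?thesis by (rule minus_equality) simp_all
qed

locale sl2m =
  fixes M :: "'b sl2mod" (structure)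
  assumes sl2: "sl2_module M"
begin

sublocale Module.module Cring M using sl2 by (simp add: sl2_module_def)

lemma linm: "lin_map M M (Lm M)" and linz: "lin_map M M (Lz M)" and linp: "lin_map M M (Lp M)"
  using sl2 by (simp_all add: sl2_module_def)

lemma Lm_closed [simp]: "v \<in> carrier M \<Longrightarrow> Lm M v \<in> carrier M"
  and Lz_closed [simp]: "v \<in> carrier M \<Longrightarrow> Lz M v \<in> carrier M"
  and Lp_closed [simp]: "v \<in> carrier M \<Longrightarrow> Lp M v \<in> carrier M"
  using linm linz linp by (auto simp: lin_map_def)

lemma Lm_add: "v \<in> carrier M \<Longrightarrow> w \<in> carrier M \<Longrightarrow> Lm M (v \<oplus> w) = Lm M v \<oplus> Lm M w"
  and Lz_add: "v \<in> carrier M \<Longrightarrow> w \<in> carrier M \<Longrightarrow> Lz M (v \<oplus> w) = Lz M v \<oplus> Lz M w"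
  and Lp_add: "v \<in> carrier M \<Longrightarrow> w \<in> carrier M \<Longrightarrow> Lp M (v \<oplus> w) = Lp M v \<oplus> Lp M w"
  using linm linz linp by (auto simp: lin_map_def)

lemma Lm_smult: "v \<in> carrier M \<Longrightarrow> Lm M (c \<odot> v) = c \<odot> Lm M v"
  and Lz_smult: "v \<in> carrier M \<Longrightarrow> Lz M (c \<odot> v) = c \<odot> Lz M v"
  and Lp_smult: "v \<in> carrier M \<Longrightarrow> Lp M (c \<odot> v) = c \<odot> Lp M v"
  using linm linz linp by (auto simp: lin_map_def)

lemma smult_closed' [simp]: "v \<in> carrier M \<Longrightarrow> c \<odot> v \<in> carrier M"
  by simp

lemma smult_zero_c [simp]: "v \<in> carrier M \<Longrightarrow> (0::complex) \<odot> v = \<zero>"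
  using smult_l_null[of v] by simp
lemma smult_one_c [simp]: "v \<in> carrier M \<Longrightarrow> (1::complex) \<odot> v = v"
  using smult_one[of v] by simp
lemma smult_add_c: "v \<in> carrier M \<Longrightarrow> (a + b) \<odot> v = a \<odot> v \<oplus> b \<odot> v"
  using smult_l_distr[of a b v] by simp
lemma smult_mult_c: "v \<in> carrier M \<Longrightarrow> (a * b) \<odot> v = a \<odot> (b \<odot> v)"
  using smult_assoc1[of a b v] by simp
lemma smult_distr_c: "v \<in> carrier M \<Longrightarrow> w \<in> carrier M \<Longrightarrow> a \<odot> (v \<oplus> w) = a \<odot> v \<oplus> a \<odot> w"
  using smult_r_distr[of a v w] by simp
lemma smult_zero_r_c [simp]: "a \<odot> \<zero> = \<zero>"
  using smult_r_null[of a] by simp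

lemma Lz_zero [simp]: "Lz M \<zero> = \<zero>"
  using Lz_smult[of \<zero> 0] by simp
lemma Lm_zero [simp]: "Lm M \<zero> = \<zero>"
  using Lm_smult[of \<zero> 0] by simp
lemma Lp_zero [simp]: "Lp M \<zero> = \<zero>"
  using Lp_smult[of \<zero> 0] by simp

lemma smult_minus1: "v \<in> carrier M \<Longrightarrow> (-1) \<odot> v = \<ominus> v"
  using smult_l_minus[of 1 v] smult_one_c[of v] by simp

lemma sub_eq_iff: "a \<in> carrier M \<Longrightarrow> b \<in> carrier M \<Longrightarrow> c \<in> carrier M \<Longrightarrow> (a \<ominus> b = c) = (a = c \<oplus> b)"
  unfolding a_minus_def by (rule add.inv_solve_right')

lemma sub_self [simp]: "a \<in> carrier M \<Longrightarrow> a \<ominus> a = \<zero>"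
  unfolding a_minus_def by (simp add: r_neg)

lemma sub_zero_iff: "a \<in> carrier M \<Longrightarrow> b \<in> carrier M \<Longrightarrow> (a \<ominus> b = \<zero>) = (a = b)"
  using sub_eq_iff[of a b \<zero>] by simp

lemma comm_mz: "v \<in> carrier M \<Longrightarrow> Lm M (Lz M v) = (-1) \<odot> Lm M v \<oplus> Lz M (Lm M v)"
proof -
  assume v: "v \<in> carrier M"
  have "Lz M (Lm M v) \<ominus> Lm M (Lz M v) = Lm M v" using sl2 v by (simp add: sl2_module_def)
  then have "Lz M (Lm M v) = Lm M v \<oplus> Lm M (Lz M v)" using v by (simp add: sub_eq_iff)
  then show ?thesis using v
    by (simp add: smult_minus1 a_assoc[symmetric] l_neg)
qed

lemma comm_pz: "v \<in> carrier M \<Longrightarrow> Lp M (Lz M v) = Lp M v \<oplus> Lz M (Lp M v)"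
proof -
  assume v: "v \<in> carrier M"
  have "Lz M (Lp M v) \<ominus> Lp M (Lz M v) = \<ominus> Lp M v" using sl2 v by (simp add: sl2_module_def)
  then have "Lz M (Lp M v) = \<ominus> Lp M v \<oplus> Lp M (Lz M v)" using v by (simp add: sub_eq_iff)
  then show ?thesis using v
    by (simp add: a_assoc[symmetric] r_neg)
qed

lemma pact_pCons: "v \<in> carrier M \<Longrightarrow> pact M (pCons a p) v = a \<odot> v \<oplus> Lz M (pact M p v)"
  by (auto simp: pact_def cCons_def)

lemma pact_0 [simp]: "pact M 0 v = \<zero>"
  by (simp add: pact_def)

lemma pact_closed [simp]: "v \<in> carrier M \<Longrightarrow> pact M p v \<in> carrier M"
  by (induction p) (simp_all add: pact_pCons)

lemma pact_const: "v \<in> carrier M \<Longrightarrow> pact M [:a:] v = a \<odot> v"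
  by (simp add: pact_pCons)

lemma pact_1 [simp]: "v \<in> carrier M \<Longrightarrow> pact M 1 v = v"
  using pact_const[of v 1] by (simp add: one_pCons)

lemma pact_lin: "v \<in> carrier M \<Longrightarrow> pact M [:a, 1:] v = a \<odot> v \<oplus> Lz M v"
  by (simp add: pact_pCons pact_const)

lemma pact_add_poly: "v \<in> carrier M \<Longrightarrow> pact M (p + q) v = pact M p v \<oplus> pact M q v"
proof (induction p arbitrary: q)
  case 0 then show ?case by simp
next
  case (pCons a p)
  note ih = pCons.IH and vv = pCons.prems
  show ?case
  proof (cases q)
    case (pCons b q')
    then show ?thesis using ih vv
      by (simp add: pact_pCons smult_add_c Lz_add a_ac)
  qed
qed

lemma pact_smult_poly: "v \<in> carrier M \<Longrightarrow> pact M (smult c p) v = c \<odot> pact M p v"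
  by (induction p) (simp_all add: pact_pCons smult_distr_c smult_mult_c Lz_smult)

lemma pact_Lz: "v \<in> carrier M \<Longrightarrow> Lz M (pact M p v) = pact M p (Lz M v)"
  by (induction p) (simp_all add: pact_pCons Lz_add Lz_smult)

lemma pact_add_vec: "v \<in> carrier M \<Longrightarrow> w \<in> carrier M \<Longrightarrow> pact M p (v \<oplus> w) = pact M p v \<oplus> pact M p w"
  by (induction p) (simp_all add: pact_pCons Lz_add smult_distr_c a_ac)

lemma pact_smult_vec: "v \<in> carrier M \<Longrightarrow> pact M p (c \<odot> v) = c \<odot> pact M p v"
  by (induction p) (simp_all add: pact_pCons Lz_smult smult_distr_c smult_mult_c[symmetric] mult.commute)

lemma pact_mult: "v \<in> carrier M \<Longrightarrow> pact M (p * q) v = pact M p (pact M q v)"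
  by (induction p) (simp_all add: pact_pCons pact_add_poly pact_smult_poly)

lemma pact_comm: "v \<in> carrier M \<Longrightarrow> pact M p (pact M q v) = pact M q (pact M p v)"
  by (metis pact_mult mult.commute)

lemma pact_Lm: "v \<in> carrier M \<Longrightarrow> Lm M (pact M p v) = pact M (pcompose p [:-1, 1:]) (Lm M v)"
  by (induction p) (simp_all add: pact_pCons pcompose_pCons pact_add_poly pact_mult pact_const
       pact_lin Lm_add Lm_smult comm_mz del: mult_pCons_left)

lemma pact_Lp: "v \<in> carrier M \<Longrightarrow> Lp M (pact M p v) = pact M (pcompose p [:1, 1:]) (Lp M v)"
  by (induction p) (simp_all add: pact_pCons pcompose_pCons pact_add_poly pact_mult pact_const
       pact_lin Lp_add Lp_smult comm_pz del: mult_pCons_left)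

lemma pact_zero_vec [simp]: "pact M p \<zero> = \<zero>"
  using pact_smult_vec[of \<zero> p 0] by simp

lemma pact_neg: "v \<in> carrier M \<Longrightarrow> pact M p (\<ominus> v) = \<ominus> pact M p v"
  using pact_smult_vec[of v p "-1"] by (simp add: smult_minus1)

lemma pact_sub: "v \<in> carrier M \<Longrightarrow> w \<in> carrier M \<Longrightarrow> pact M p (v \<ominus> w) = pact M p v \<ominus> pact M p w"
  by (simp add: a_minus_def pact_add_vec pact_neg)

end

lemma lin_map_zero:
  assumes "sl2m M" "sl2m N" "lin_map M N f"
  shows "f \<zero>\<^bsub>M\<^esub> = \<zero>\<^bsub>N\<^esub>"
proof -
  interpret M: sl2m M by fact
  interpret N: sl2m N by fact
  have "f ((0::complex) \<odot>\<^bsub>M\<^esub> \<zero>\<^bsub>M\<^esub>) = (0::complex) \<odot>\<^bsub>N\<^esub> f \<zero>\<^bsub>M\<^esub>"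
    using assms(3) unfolding lin_map_def by blast
  moreover have "f \<zero>\<^bsub>M\<^esub> \<in> carrier N" using assms(3) unfolding lin_map_def by blast
  ultimately show ?thesis by simp
qed

lemma hom_pact:
  assumes "sl2m M" "sl2m N" "sl2_hom M N f" "v \<in> carrier M"
  shows "f (pact M p v) = pact N p (f v)"
proof -
  interpret M: sl2m M by fact
  interpret N: sl2m N by fact
  have lm: "lin_map M N f" using assms(3) by (simp add: sl2_hom_def)
  have cl: "\<And>x. x \<in> carrier M \<Longrightarrow> f x \<in> carrier N" using lm by (auto simp: lin_map_def)
  show ?thesis using assms(4)
  proof (induction p)
    case 0 then show ?case using lin_map_zero[OF assms(1,2) lm] by simp
  next
    case (pCons a p)
    then show ?case using lm assms(3) cl
      by (simp add: M.pact_pCons N.pact_pCons lin_map_def sl2_hom_def)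
  qed
qed

lemma pcomp_nz: "(p::complex poly) \<noteq> 0 \<Longrightarrow> pcompose p [:c, 1:] \<noteq> 0"
  using pcompose_eq_0[of p "[:c,1:]"] by auto

lemma pcomp_mp: "pcompose (pcompose (p::complex poly) [:-1, 1:]) [:1, 1:] = p"
  by (simp add: pcompose_assoc[symmetric] pcompose_pCons)

lemma pcomp_pm: "pcompose (pcompose (p::complex poly) [:1, 1:]) [:-1, 1:] = p"
  by (simp add: pcompose_assoc[symmetric] pcompose_pCons)

locale tf = sl2m +
  assumes tfree: "torsion_free M"
begin

lemma pact_eq0: "s \<noteq> 0 \<Longrightarrow> v \<in> carrier M \<Longrightarrow> pact M s v = \<zero> \<Longrightarrow> v = \<zero>"
  using tfree by (auto simp: torsion_free_def)

lemma pact_inj: "s \<noteq> 0 \<Longrightarrow> v \<in> carrier M \<Longrightarrow> w \<in> carrier M \<Longrightarrow> pact M s v = pact M s w \<Longrightarrow> v = w"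
  using pact_eq0[of s "v \<ominus> w"] by (simp add: pact_sub sub_zero_iff)

lemma rel_iff: "((v, p), (w, q)) \<in> frac_rel M \<longleftrightarrow>
   v \<in> carrier M \<and> w \<in> carrier M \<and> p \<noteq> 0 \<and> q \<noteq> 0 \<and> pact M q v = pact M p w"
proof
  assume "((v, p), (w, q)) \<in> frac_rel M"
  then obtain s where "v \<in> carrier M" "w \<in> carrier M" "p \<noteq> 0" "q \<noteq> 0" "s \<noteq> 0"
    "pact M s (pact M q v \<ominus> pact M p w) = \<zero>" by (auto simp: frac_rel_def)
  then show "v \<in> carrier M \<and> w \<in> carrier M \<and> p \<noteq> 0 \<and> q \<noteq> 0 \<and> pact M q v = pact M p w"
    using pact_eq0[of s "pact M q v \<ominus> pact M p w"] by (simp add: sub_zero_iff)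
next
  assume "v \<in> carrier M \<and> w \<in> carrier M \<and> p \<noteq> 0 \<and> q \<noteq> 0 \<and> pact M q v = pact M p w"
  then show "((v, p), (w, q)) \<in> frac_rel M"
    unfolding frac_rel_def by (auto intro!: exI[of _ 1])
qed

abbreviation "VP \<equiv> carrier M \<times> {p :: complex poly. p \<noteq> 0}"

lemma equiv_rel: "equiv VP (frac_rel M)"
proof (rule equivI)
  show "frac_rel M \<subseteq> VP \<times> VP"
  proof
    fix z assume z: "z \<in> frac_rel M"
    obtain v p w q where e: "z = ((v, p), (w, q))" by (cases z) (simp add: prod_eq_iff)
    show "z \<in> VP \<times> VP" using z unfolding e rel_iff by simp
  qed
  show "refl_on VP (frac_rel M)"
  proof (rule refl_onI)
    fix x assume "x \<in> VP"
    then obtain v p where "x = (v, p)" "v \<in> carrier M" "p \<noteq> 0" by auto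
    then show "(x, x) \<in> frac_rel M" by (simp add: rel_iff)
  qed
  show "sym (frac_rel M)"
  proof (rule symI)
    fix x y assume xy: "(x, y) \<in> frac_rel M"
    obtain v p w q where e: "x = (v, p)" "y = (w, q)" by (cases x, cases y) auto
    show "(y, x) \<in> frac_rel M" using xy unfolding e rel_iff by simp
  qed
  show "trans (frac_rel M)"
  proof (rule transI)
    fix x y z assume xy: "(x, y) \<in> frac_rel M" and yz: "(y, z) \<in> frac_rel M"
    obtain v p w q u r where e: "x = (v, p)" "y = (w, q)" "z = (u, r)" by (cases x, cases y, cases z) auto
    have h1: "v \<in> carrier M \<and> w \<in> carrier M \<and> p \<noteq> 0 \<and> q \<noteq> 0 \<and> pact M q v = pact M p w"
      using xy unfolding e rel_iff .
    have h2: "w \<in> carrier M \<and> u \<in> carrier M \<and> q \<noteq> 0 \<and> r \<noteq> 0 \<and> pact M r w = pact M q u"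
      using yz unfolding e rel_iff .
    have "pact M q (pact M r v) = pact M r (pact M q v)" using h1 pact_comm by blast
    also have "\<dots> = pact M r (pact M p w)" using h1 by argo
    also have "\<dots> = pact M p (pact M r w)" using h1 pact_comm by blast
    also have "\<dots> = pact M p (pact M q u)" using h2 by argo
    also have "\<dots> = pact M q (pact M p u)" using h2 pact_comm by blast
    finally have "pact M q (pact M r v) = pact M q (pact M p u)" .
    then have "pact M r v = pact M p u" using h1 h2 pact_inj[of q "pact M r v" "pact M p u"] by simp
    then show "(x, z) \<in> frac_rel M" using h1 h2 unfolding e rel_iff by blast
  qed
qed

lemma frac_eq: "v \<in> carrier M \<Longrightarrow> w \<in> carrier M \<Longrightarrow> p \<noteq> 0 \<Longrightarrow> q \<noteq> 0 \<Longrightarrow>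
   frac M v p = frac M w q \<longleftrightarrow> pact M q v = pact M p w"
  unfolding frac_def using equiv_class_eq_iff[OF equiv_rel, of "(v,p)" "(w,q)"]
  by (auto simp: rel_iff)

lemma frac_self: "v \<in> carrier M \<Longrightarrow> p \<noteq> 0 \<Longrightarrow> (v, p) \<in> frac M v p"
  unfolding frac_def by (rule equiv_class_self[OF equiv_rel]) auto

lemma rep_frac:
  assumes "v \<in> carrier M" "p \<noteq> 0"
  obtains v' p' where "rep (frac M v p) = (v', p')" "v' \<in> carrier M" "p' \<noteq> 0"
     "pact M p' v = pact M p v'" "frac M v' p' = frac M v p"
proof -
  have "rep (frac M v p) \<in> frac M v p"
    unfolding rep_def by (rule someI, rule frac_self[OF assms])
  moreover obtain v' p' where r0: "rep (frac M v p) = (v', p')" by (cases "rep (frac M v p)") auto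
  ultimately have r: "rep (frac M v p) = (v', p')" "((v, p), (v', p')) \<in> frac_rel M"
    by (auto simp: frac_def)
  then have "v' \<in> carrier M" "p' \<noteq> 0" "pact M p' v = pact M p v'" by (auto simp: rel_iff)
  moreover have "frac M v' p' = frac M v p" using calculation assms by (simp add: frac_eq)
  ultimately show ?thesis using r that by blast
qed

lemma frac_scale: "v \<in> carrier M \<Longrightarrow> p \<noteq> 0 \<Longrightarrow> r \<noteq> 0 \<Longrightarrow> frac M (pact M r v) (r * p) = frac M v p"
  by (simp add: frac_eq pact_mult[symmetric] mult.commute)

lemma frac_zero: "p \<noteq> 0 \<Longrightarrow> frac M \<zero> p = frac M \<zero> 1"
  by (simp add: frac_eq)

abbreviation "F \<equiv> Frat M"

lemma F_carrier: "carrier F = {frac M v p | v p. v \<in> carrier M \<and> p \<noteq> 0}"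
  by (simp add: Frat_def)

lemma F_in [simp]: "v \<in> carrier M \<Longrightarrow> p \<noteq> 0 \<Longrightarrow> frac M v p \<in> carrier F"
  by (auto simp: F_carrier)

lemma F_cases:
  assumes "X \<in> carrier F"
  obtains v p where "X = frac M v p" "v \<in> carrier M" "p \<noteq> 0"
  using assms by (auto simp: F_carrier)

lemma F_zero: "\<zero>\<^bsub>F\<^esub> = frac M \<zero> 1"
  by (simp add: Frat_def)

lemma F_add: assumes "v \<in> carrier M" "w \<in> carrier M" "p \<noteq> 0" "q \<noteq> 0"
  shows "frac M v p \<oplus>\<^bsub>F\<^esub> frac M w q = frac M (pact M q v \<oplus> pact M p w) (p * q)"
proof -
  obtain v' p' where A: "rep (frac M v p) = (v', p')" "v' \<in> carrier M" "p' \<noteq> 0"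
     "pact M p' v = pact M p v'" using rep_frac[OF assms(1,3)] by blast
  obtain w' q' where B: "rep (frac M w q) = (w', q')" "w' \<in> carrier M" "q' \<noteq> 0"
     "pact M q' w = pact M q w'" using rep_frac[OF assms(2,4)] by blast
  have 1: "pact M (p * q) (pact M q' v') = pact M (p' * q') (pact M q v)"
  proof -
    have "pact M (p * q) (pact M q' v') = pact M (q * q') (pact M p v')"
      using A by (simp add: pact_mult[symmetric] mult_ac)
    also have "\<dots> = pact M (q * q') (pact M p' v)" using A by simp
    also have "\<dots> = pact M (p' * q') (pact M q v)"
      using assms by (simp add: pact_mult[symmetric] mult_ac)
    finally show ?thesis .
  qed
  have 2: "pact M (p * q) (pact M p' w') = pact M (p' * q') (pact M p w)"
  proof -
    have "pact M (p * q) (pact M p' w') = pact M (p * p') (pact M q w')"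
      using B by (simp add: pact_mult[symmetric] mult_ac)
    also have "\<dots> = pact M (p * p') (pact M q' w)" using B by simp
    also have "\<dots> = pact M (p' * q') (pact M p w)"
      using assms by (simp add: pact_mult[symmetric] mult_ac)
    finally show ?thesis .
  qed
  have "frac M v p \<oplus>\<^bsub>F\<^esub> frac M w q = frac M (pact M q' v' \<oplus> pact M p' w') (p' * q')"
    using A B by (simp add: Frat_def)
  also have "\<dots> = frac M (pact M q v \<oplus> pact M p w) (p * q)"
    using A B assms 1 2 by (simp add: frac_eq pact_add_vec)
  finally show ?thesis .
qed

lemma F_add_same: "v \<in> carrier M \<Longrightarrow> w \<in> carrier M \<Longrightarrow> p \<noteq> 0 \<Longrightarrow>
    frac M v p \<oplus>\<^bsub>F\<^esub> frac M w p = frac M (v \<oplus> w) p"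
  by (simp add: F_add pact_add_vec[symmetric] frac_scale)

lemma F_smult: assumes "v \<in> carrier M" "p \<noteq> 0"
  shows "c \<odot>\<^bsub>F\<^esub> frac M v p = frac M (c \<odot> v) p"
proof -
  obtain v' p' where A: "rep (frac M v p) = (v', p')" "v' \<in> carrier M" "p' \<noteq> 0"
     "pact M p' v = pact M p v'" using rep_frac[OF assms] by blast
  then show ?thesis using assms by (simp add: Frat_def frac_eq pact_smult_vec)
qed

lemma F_Lz: assumes "v \<in> carrier M" "p \<noteq> 0"
  shows "Lz F (frac M v p) = frac M (Lz M v) p"
proof -
  obtain v' p' where A: "rep (frac M v p) = (v', p')" "v' \<in> carrier M" "p' \<noteq> 0"
     "pact M p' v = pact M p v'" using rep_frac[OF assms] by blast
  then show ?thesis using assms by (simp add: Frat_def frac_eq pact_Lz[symmetric])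
qed

lemma F_Lm: assumes "v \<in> carrier M" "p \<noteq> 0"
  shows "Lm F (frac M v p) = frac M (Lm M v) (pcompose p [:-1, 1:])"
proof -
  obtain v' p' where A: "rep (frac M v p) = (v', p')" "v' \<in> carrier M" "p' \<noteq> 0"
     "pact M p' v = pact M p v'" using rep_frac[OF assms] by blast
  then show ?thesis using assms by (simp add: Frat_def frac_eq pact_Lm[symmetric] pcomp_nz)
qed

lemma F_Lp: assumes "v \<in> carrier M" "p \<noteq> 0"
  shows "Lp F (frac M v p) = frac M (Lp M v) (pcompose p [:1, 1:])"
proof -
  obtain v' p' where A: "rep (frac M v p) = (v', p')" "v' \<in> carrier M" "p' \<noteq> 0"
     "pact M p' v = pact M p v'" using rep_frac[OF assms] by blast
  then show ?thesis using assms by (simp add: Frat_def frac_eq pact_Lp[symmetric] pcomp_nz)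
qed


lemma rels: "v \<in> carrier M \<Longrightarrow> Lp M (Lm M v) \<ominus> Lm M (Lp M v) = (2::complex) \<odot> Lz M v"
   "v \<in> carrier M \<Longrightarrow> Lz M (Lp M v) \<ominus> Lp M (Lz M v) = \<ominus> Lp M v"
   "v \<in> carrier M \<Longrightarrow> Lz M (Lm M v) \<ominus> Lm M (Lz M v) = Lm M v"
  using sl2 by (simp_all add: sl2_module_def)

lemma F_add_closed: "X \<in> carrier F \<Longrightarrow> Y \<in> carrier F \<Longrightarrow> X \<oplus>\<^bsub>F\<^esub> Y \<in> carrier F"
  by (elim F_cases) (simp add: F_add)

lemma F_abelian: "abelian_group F"
proof (rule abelian_groupI)
  fix X Y Z assume X: "X \<in> carrier F" and Y: "Y \<in> carrier F" and Z: "Z \<in> carrier F"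
  show "X \<oplus>\<^bsub>F\<^esub> Y \<in> carrier F" using X Y by (rule F_add_closed)
  obtain v p where ex: "X = frac M v p" "v \<in> carrier M" "p \<noteq> 0" using X by (rule F_cases)
  obtain w q where ey: "Y = frac M w q" "w \<in> carrier M" "q \<noteq> 0" using Y by (rule F_cases)
  obtain u r where ez: "Z = frac M u r" "u \<in> carrier M" "r \<noteq> 0" using Z by (rule F_cases)
  have 1: "X \<oplus>\<^bsub>F\<^esub> Y \<oplus>\<^bsub>F\<^esub> Z = frac M ((pact M (r * q) v \<oplus> pact M (r * p) w) \<oplus> pact M (p * q) u) (p * q * r)"
    using ex ey ez by (simp add: F_add pact_add_vec pact_mult)
  have 2: "X \<oplus>\<^bsub>F\<^esub> (Y \<oplus>\<^bsub>F\<^esub> Z) = frac M (pact M (q * r) v \<oplus> (pact M (p * r) w \<oplus> pact M (p * q) u)) (p * (q * r))"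
    using ex ey ez by (simp add: F_add pact_add_vec pact_mult)
  show "X \<oplus>\<^bsub>F\<^esub> Y \<oplus>\<^bsub>F\<^esub> Z = X \<oplus>\<^bsub>F\<^esub> (Y \<oplus>\<^bsub>F\<^esub> Z)"
    unfolding 1 2 using ex ey ez by (simp add: a_assoc mult.commute mult.left_commute)
  show "X \<oplus>\<^bsub>F\<^esub> Y = Y \<oplus>\<^bsub>F\<^esub> X"
    using ex ey by (simp add: F_add a_comm mult.commute)
next
  show "\<zero>\<^bsub>F\<^esub> \<in> carrier F" by (simp add: F_zero)
next
  fix X assume X: "X \<in> carrier F"
  then obtain v p where e: "X = frac M v p" "v \<in> carrier M" "p \<noteq> 0" by (rule F_cases)
  show "\<zero>\<^bsub>F\<^esub> \<oplus>\<^bsub>F\<^esub> X = X" using e by (simp add: F_zero F_add)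
  have "frac M (\<ominus> v) p \<oplus>\<^bsub>F\<^esub> X = \<zero>\<^bsub>F\<^esub>"
    using e by (simp add: F_add_same l_neg F_zero frac_zero[of p])
  then show "\<exists>Y\<in>carrier F. Y \<oplus>\<^bsub>F\<^esub> X = \<zero>\<^bsub>F\<^esub>" using e by (intro bexI[of _ "frac M (\<ominus> v) p"]) auto
qed

lemma F_module: "Module.module Cring F"
proof (rule moduleI[OF cring_Cring F_abelian])
  fix a b :: complex and X Y assume X: "X \<in> carrier F" and Y: "Y \<in> carrier F"
  show "a \<odot>\<^bsub>F\<^esub> X \<in> carrier F" using X by (elim F_cases) (simp add: F_smult)
  show "(a \<oplus>\<^bsub>Cring\<^esub> b) \<odot>\<^bsub>F\<^esub> X = a \<odot>\<^bsub>F\<^esub> X \<oplus>\<^bsub>F\<^esub> b \<odot>\<^bsub>F\<^esub> X"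
    using X by (elim F_cases) (simp add: F_smult F_add_same smult_add_c)
  show "a \<odot>\<^bsub>F\<^esub> (X \<oplus>\<^bsub>F\<^esub> Y) = a \<odot>\<^bsub>F\<^esub> X \<oplus>\<^bsub>F\<^esub> a \<odot>\<^bsub>F\<^esub> Y"
    using X Y by (elim F_cases) (simp add: F_smult F_add smult_distr_c pact_smult_vec)
  show "(a \<otimes>\<^bsub>Cring\<^esub> b) \<odot>\<^bsub>F\<^esub> X = a \<odot>\<^bsub>F\<^esub> (b \<odot>\<^bsub>F\<^esub> X)"
    using X by (elim F_cases) (simp add: F_smult smult_mult_c)
  show "\<one>\<^bsub>Cring\<^esub> \<odot>\<^bsub>F\<^esub> X = X"
    using X by (elim F_cases) (simp add: F_smult)
qed

interpretation FA: Module.module Cring F by (rule F_module)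

lemma F_neg: "v \<in> carrier M \<Longrightarrow> p \<noteq> 0 \<Longrightarrow> \<ominus>\<^bsub>F\<^esub> frac M v p = frac M (\<ominus> v) p"
  by (rule FA.minus_equality) (simp_all add: F_add_same l_neg F_zero frac_zero[of p])

lemma F_sub_same: "v \<in> carrier M \<Longrightarrow> w \<in> carrier M \<Longrightarrow> p \<noteq> 0 \<Longrightarrow>
    frac M v p \<ominus>\<^bsub>F\<^esub> frac M w p = frac M (v \<ominus> w) p"
  by (simp add: a_minus_def F_neg F_add_same)

lemma F_lin: "lin_map F F (Lm F)" "lin_map F F (Lz F)" "lin_map F F (Lp F)"
  unfolding lin_map_def
  by (auto elim!: F_cases simp: F_Lm F_Lz F_Lp F_add F_smult pcomp_nz pact_Lm pact_Lz pact_Lp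
        Lm_add Lz_add Lp_add Lm_smult Lz_smult Lp_smult pcompose_mult)

lemma F_sl2: "sl2_module F"
  unfolding sl2_module_def
proof (intro conjI F_module F_lin ballI)
  fix X assume X: "X \<in> carrier F"
  then obtain v p where e: "X = frac M v p" "v \<in> carrier M" "p \<noteq> 0" by (rule F_cases)
  show "Lp F (Lm F X) \<ominus>\<^bsub>F\<^esub> Lm F (Lp F X) = (2::complex) \<odot>\<^bsub>F\<^esub> Lz F X"
    using e by (simp add: F_Lm F_Lz F_Lp pcomp_nz pcomp_mp pcomp_pm F_sub_same rels F_smult)
  show "Lz F (Lp F X) \<ominus>\<^bsub>F\<^esub> Lp F (Lz F X) = \<ominus>\<^bsub>F\<^esub> Lp F X"
    using e by (simp add: F_Lm F_Lz F_Lp pcomp_nz F_sub_same rels F_neg)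
  show "Lz F (Lm F X) \<ominus>\<^bsub>F\<^esub> Lm F (Lz F X) = Lm F X"
    using e by (simp add: F_Lm F_Lz F_Lp pcomp_nz F_sub_same rels)
qed

end

sublocale tf \<subseteq> FF: sl2m "Frat M" by unfold_locales (rule F_sl2)

context tf begin

lemma F_pact: "v \<in> carrier M \<Longrightarrow> p \<noteq> 0 \<Longrightarrow> pact F r (frac M v p) = frac M (pact M r v) p"
  by (induction r) (simp_all add: FF.pact_pCons F_zero frac_zero[of p] F_smult F_Lz F_add_same pact_pCons)

lemma F_tfree: "torsion_free F"
  unfolding torsion_free_def
proof (intro allI impI ballI)
  fix s X assume s: "s \<noteq> 0" and X: "X \<in> carrier F" and e0: "pact F s X = \<zero>\<^bsub>F\<^esub>"
  obtain v p where e: "X = frac M v p" "v \<in> carrier M" "p \<noteq> 0" using X by (rule F_cases)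
  have "frac M (pact M s v) p = frac M \<zero> 1" using e0 e by (simp add: F_pact F_zero)
  then have "pact M s v = \<zero>" using e by (simp add: frac_eq)
  then have "v = \<zero>" using pact_eq0 s e by blast
  then show "X = \<zero>\<^bsub>F\<^esub>" using e by (simp add: F_zero frac_zero[of p])
qed

lemma F_bij: "r \<noteq> 0 \<Longrightarrow> bij_betw (pact F r) (carrier F) (carrier F)"
  unfolding bij_betw_def
proof
  assume r: "r \<noteq> 0"
  show "inj_on (pact F r) (carrier F)"
  proof (rule inj_onI)
    fix X Y assume X: "X \<in> carrier F" and Y: "Y \<in> carrier F" and eq: "pact F r X = pact F r Y"
    obtain v p where ex: "X = frac M v p" "v \<in> carrier M" "p \<noteq> 0" using X by (rule F_cases)
    obtain w q where ey: "Y = frac M w q" "w \<in> carrier M" "q \<noteq> 0" using Y by (rule F_cases)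
    have "pact M q (pact M r v) = pact M p (pact M r w)" using eq ex ey by (simp add: F_pact frac_eq)
    moreover have "pact M r (pact M q v) = pact M q (pact M r v)" using ex(2) by (rule pact_comm)
    moreover have "pact M r (pact M p w) = pact M p (pact M r w)" using ey(2) by (rule pact_comm)
    ultimately have "pact M r (pact M q v) = pact M r (pact M p w)" by argo
    then have "pact M q v = pact M p w" using pact_inj[of r "pact M q v" "pact M p w"] r ex ey by simp
    then show "X = Y" using ex ey by (simp add: frac_eq)
  qed
  show "pact F r ` carrier F = carrier F"
  proof
    show "pact F r ` carrier F \<subseteq> carrier F" by auto
    show "carrier F \<subseteq> pact F r ` carrier F"
    proof
      fix X assume X: "X \<in> carrier F"
      obtain v p where ex: "X = frac M v p" "v \<in> carrier M" "p \<noteq> 0" using X by (rule F_cases)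
      have "X = pact F r (frac M v (r * p))" using ex r by (simp add: F_pact frac_scale)
      moreover have "frac M v (r * p) \<in> carrier F" using ex r by simp
      ultimately show "X \<in> pact F r ` carrier F" by blast
    qed
  qed
qed

lemma eta_hom: "sl2_hom M F (eta M)"
  unfolding sl2_hom_def lin_map_def eta_def
  by (auto simp: F_add_same F_smult F_Lm F_Lz F_Lp pcompose_1)

lemma eta_inj: "inj_on (eta M) (carrier M)"
  by (rule inj_onI) (simp add: eta_def frac_eq)

lemma eta_finsum: "finite A \<Longrightarrow> A \<subseteq> carrier M \<Longrightarrow> g \<in> A \<rightarrow> carrier M \<Longrightarrow>
   frac M (finsum M g A) 1 = finsum F (\<lambda>b. frac M (g b) 1) A"
proof (induction A rule: finite_induct)
  case empty then show ?case by (simp add: F_zero)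
next
  case (insert a A)
  have "finsum M g (insert a A) = g a \<oplus> finsum M g A" using insert by simp
  moreover have "finsum F (\<lambda>b. frac M (g b) 1) (insert a A) = frac M (g a) 1 \<oplus>\<^bsub>F\<^esub> finsum F (\<lambda>b. frac M (g b) 1) A"
    using insert by (intro FF.finsum_insert) (auto simp: Pi_iff)
  moreover have "g a \<in> carrier M" "finsum M g A \<in> carrier M" using insert by auto
  ultimately show ?case using insert.IH insert.prems by (simp add: F_add_same[symmetric])
qed

lemma F_rational_aux: "\<forall>p. p \<noteq> 0 \<longrightarrow> bij_betw (pact F p) (carrier F) (carrier F)"
  using F_bij by blast

end

locale tfr = tf +
  assumes fr: "finite_rank M"
begin

lemma F_fr: "finite_rank F"
proof -
  obtain B where B: "finite B" "B \<subseteq> carrier M" "\<And>v. v \<in> carrier M \<Longrightarrow> \<exists>s. s \<noteq> 0 \<and> pact M s v \<in> pspan M B"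
    using fr unfolding finite_rank_def by blast
  let ?B = "eta M ` B"
  have inj: "inj_on (eta M) B" using eta_inj B(2) by (rule inj_on_subset)
  have "\<exists>s. s \<noteq> 0 \<and> pact F s X \<in> pspan F ?B" if X: "X \<in> carrier F" for X
  proof -
    obtain v p where ex: "X = frac M v p" "v \<in> carrier M" "p \<noteq> 0" using X by (rule F_cases)
    obtain s c where s: "s \<noteq> 0" "pact M s v = finsum M (\<lambda>b. pact M (c b) b) B"
      using B(3)[OF ex(2)] unfolding pspan_def by blast
    define c' where "c' = (\<lambda>Y. c (inv_into B (eta M) Y))"
    have "pact F (s * p) X = frac M (pact M (s * p) v) p"
      using ex by (simp add: F_pact)
    also have "\<dots> = frac M (pact M s v) 1"
      using ex s(1) by (simp add: frac_eq pact_mult[symmetric] mult.commute)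
    also have "\<dots> = finsum F (\<lambda>b. frac M (pact M (c b) b) 1) B"
      unfolding s(2) using B by (intro eta_finsum) auto
    also have "\<dots> = finsum F (\<lambda>b. pact F (c' (eta M b)) (eta M b)) B"
    proof (intro FF.finsum_cong')
      show "(\<lambda>b. pact F (c' (eta M b)) (eta M b)) \<in> B \<rightarrow> carrier F"
        using B by (auto simp: eta_def)
      fix i assume i: "i \<in> B"
      have "c' (eta M i) = c i" unfolding c'_def using inv_into_f_f[OF inj i] by simp
      then show "frac M (pact M (c i) i) 1 = pact F (c' (eta M i)) (eta M i)"
        using i B by (auto simp: eta_def F_pact)
    qed simp
    also have "\<dots> = finsum F (\<lambda>Y. pact F (c' Y) Y) ?B"
      using B inj unfolding eta_def by (intro FF.finsum_reindex[symmetric]) auto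
    finally have "pact F (s * p) X = finsum F (\<lambda>Y. pact F (c' Y) Y) ?B" .
    then show ?thesis using s ex unfolding pspan_def by (intro exI[of _ "s * p"]) auto
  qed
  moreover have "finite ?B" "?B \<subseteq> carrier F" using B by (auto simp: eta_def)
  ultimately show ?thesis unfolding finite_rank_def by blast
qed

lemma F_tffr: "tffr F"
  unfolding tffr_def using F_sl2 F_tfree F_fr by blast

lemma F_rational: "rational F"
  unfolding rational_def using F_tffr F_bij by blast

end

lemma (in tf) Fmor_id: "X \<in> carrier F \<Longrightarrow> Fmor M M id X = X"
proof -
  assume X: "X \<in> carrier F"
  obtain v p where ex: "X = frac M v p" "v \<in> carrier M" "p \<noteq> 0" using X by (rule F_cases)
  obtain v' p' where r: "rep (frac M v p) = (v', p')" "frac M v' p' = frac M v p"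
    using rep_frac[OF ex(2,3)] by blast
  show ?thesis using r ex by (simp add: Fmor_def)
qed

lemma hom_closed: "sl2_hom M N f \<Longrightarrow> v \<in> carrier M \<Longrightarrow> f v \<in> carrier N"
  by (auto simp: sl2_hom_def lin_map_def)

lemma hom_comp: "sl2_hom M N f \<Longrightarrow> sl2_hom N K g \<Longrightarrow> sl2_hom M K (g \<circ> f)"
  unfolding sl2_hom_def lin_map_def by (auto simp: Pi_iff)

locale tf2 = V: tf V + W: tf W for V :: "'a sl2mod" and W :: "'b sl2mod"
begin

lemma Fmor_frac:
  assumes f: "sl2_hom V W f" and v: "v \<in> carrier V" and p: "p \<noteq> 0"
  shows "Fmor V W f (frac V v p) = frac W (f v) p"
proof -
  obtain v' p' where r: "rep (frac V v p) = (v', p')" "v' \<in> carrier V" "p' \<noteq> 0"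
     "pact V p' v = pact V p v'" using V.rep_frac[OF v p] by blast
  have "pact W p (f v') = pact W p' (f v)"
    using hom_pact[OF V.sl2m_axioms W.sl2m_axioms f] r v by metis
  then show ?thesis using r v p f by (simp add: Fmor_def W.frac_eq hom_closed)
qed

lemma Fmor_hom:
  assumes f: "sl2_hom V W f"
  shows "sl2_hom (Frat V) (Frat W) (Fmor V W f)"
proof -
  have cl: "\<And>x. x \<in> carrier V \<Longrightarrow> f x \<in> carrier W" using f by (rule hom_closed)
  have hp: "\<And>x q. x \<in> carrier V \<Longrightarrow> f (pact V q x) = pact W q (f x)"
    using hom_pact[OF V.sl2m_axioms W.sl2m_axioms f] by blast
  have lin: "\<And>x y. x \<in> carrier V \<Longrightarrow> y \<in> carrier V \<Longrightarrow> f (x \<oplus>\<^bsub>V\<^esub> y) = f x \<oplus>\<^bsub>W\<^esub> f y"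
    "\<And>c x. x \<in> carrier V \<Longrightarrow> f (c \<odot>\<^bsub>V\<^esub> x) = c \<odot>\<^bsub>W\<^esub> f x"
    "\<And>x. x \<in> carrier V \<Longrightarrow> f (Lm V x) = Lm W (f x)"
    "\<And>x. x \<in> carrier V \<Longrightarrow> f (Lz V x) = Lz W (f x)"
    "\<And>x. x \<in> carrier V \<Longrightarrow> f (Lp V x) = Lp W (f x)"
    using f by (auto simp: sl2_hom_def lin_map_def)
  show ?thesis
    unfolding sl2_hom_def lin_map_def
    by (auto elim!: V.F_cases simp: Fmor_frac[OF f] V.F_add W.F_add V.F_smult W.F_smult
        V.F_Lm W.F_Lm V.F_Lz W.F_Lz V.F_Lp W.F_Lp cl hp lin pcomp_nz)
qed

lemma Fmor_eta: "sl2_hom V W f \<Longrightarrow> v \<in> carrier V \<Longrightarrow> Fmor V W f (eta V v) = eta W (f v)"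
  by (simp add: eta_def Fmor_frac)

lemma faithful:
  assumes f: "sl2_hom V W f" and g: "sl2_hom V W g"
    and eq: "\<forall>X\<in>carrier (Frat V). Fmor V W f X = Fmor V W g X" and v: "v \<in> carrier V"
  shows "f v = g v"
proof -
  have "Fmor V W f (frac V v 1) = Fmor V W g (frac V v 1)" using eq v by simp
  then have "frac W (f v) 1 = frac W (g v) 1" using f g v by (simp add: Fmor_frac)
  then show ?thesis using f g v by (simp add: W.frac_eq hom_closed)
qed

end

definition ext :: "'a sl2mod \<Rightarrow> 'b sl2mod \<Rightarrow> ('a \<Rightarrow> 'b) \<Rightarrow> ('a \<times> complex poly) set \<Rightarrow> 'b" where
  "ext V W f X = (case rep X of (v, p) \<Rightarrow> THE w. w \<in> carrier W \<and> pact W p w = f v)"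

locale tfrat = V: tf V + W: tf W for V :: "'a sl2mod" and W :: "'b sl2mod" +
  fixes f assumes rat: "rational W" and f: "sl2_hom V W f"
begin

lemma cl: "x \<in> carrier V \<Longrightarrow> f x \<in> carrier W" using f by (rule hom_closed)
lemma hp: "x \<in> carrier V \<Longrightarrow> f (pact V q x) = pact W q (f x)"
  using hom_pact[OF V.sl2m_axioms W.sl2m_axioms f] by blast

lemma sol: assumes "p \<noteq> 0" "y \<in> carrier W" shows "\<exists>w. w \<in> carrier W \<and> pact W p w = y"
  using rat assms unfolding rational_def bij_betw_def by (metis imageE)

lemma ext_char:
  assumes v: "v \<in> carrier V" and p: "p \<noteq> 0" and w: "w \<in> carrier W" and e: "pact W p w = f v"
  shows "ext V W f (frac V v p) = w"
proof -
  obtain v' p' where r: "rep (frac V v p) = (v', p')" "v' \<in> carrier V" "p' \<noteq> 0"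
     "pact V p' v = pact V p v'" using V.rep_frac[OF v p] by blast
  have "pact W p (pact W p' w) = pact W p' (pact W p w)" using w by (rule W.pact_comm)
  also have "\<dots> = pact W p' (f v)" using e by simp
  also have "\<dots> = f (pact V p' v)" using hp v by simp
  also have "\<dots> = f (pact V p v')" using r by simp
  also have "\<dots> = pact W p (f v')" using hp r by simp
  finally have w': "pact W p' w = f v'" using W.pact_inj[OF p] w cl r by simp
  have "(THE w. w \<in> carrier W \<and> pact W p' w = f v') = w"
  proof (rule the_equality)
    show "w \<in> carrier W \<and> pact W p' w = f v'" using w w' by simp
    fix u assume "u \<in> carrier W \<and> pact W p' u = f v'"
    then show "u = w" using W.pact_inj[OF r(3)] w w' by simp
  qed
  then show ?thesis using r by (simp add: ext_def)
qed

lemma ext_ex: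
  assumes v: "v \<in> carrier V" and p: "p \<noteq> 0"
  shows "ext V W f (frac V v p) \<in> carrier W \<and> pact W p (ext V W f (frac V v p)) = f v"
proof -
  obtain w where "w \<in> carrier W" "pact W p w = f v" using sol[OF p cl[OF v]] by blast
  then show ?thesis using ext_char[OF v p] by simp
qed

lemma ext_hom: "sl2_hom (Frat V) W (ext V W f)"
proof -
  have lin: "\<And>x y. x \<in> carrier V \<Longrightarrow> y \<in> carrier V \<Longrightarrow> f (x \<oplus>\<^bsub>V\<^esub> y) = f x \<oplus>\<^bsub>W\<^esub> f y"
    "\<And>c x. x \<in> carrier V \<Longrightarrow> f (c \<odot>\<^bsub>V\<^esub> x) = c \<odot>\<^bsub>W\<^esub> f x"
    "\<And>x. x \<in> carrier V \<Longrightarrow> f (Lm V x) = Lm W (f x)"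
    "\<And>x. x \<in> carrier V \<Longrightarrow> f (Lz V x) = Lz W (f x)"
    "\<And>x. x \<in> carrier V \<Longrightarrow> f (Lp V x) = Lp W (f x)"
    using f by (auto simp: sl2_hom_def lin_map_def)
  have clo: "ext V W f X \<in> carrier W" if "X \<in> carrier (Frat V)" for X
    using that by (elim V.F_cases) (simp add: ext_ex)
  have add: "ext V W f (X \<oplus>\<^bsub>Frat V\<^esub> Y) = ext V W f X \<oplus>\<^bsub>W\<^esub> ext V W f Y"
    if X: "X \<in> carrier (Frat V)" and Y: "Y \<in> carrier (Frat V)" for X Y
  proof -
    obtain v p where ex: "X = frac V v p" "v \<in> carrier V" "p \<noteq> 0" using X by (rule V.F_cases)
    obtain w q where ey: "Y = frac V w q" "w \<in> carrier V" "q \<noteq> 0" using Y by (rule V.F_cases)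
    define a where "a = ext V W f X"
    define b where "b = ext V W f Y"
    have a: "a \<in> carrier W" "pact W p a = f v" using ext_ex[OF ex(2,3)] ex(1) a_def by auto
    have b: "b \<in> carrier W" "pact W q b = f w" using ext_ex[OF ey(2,3)] ey(1) b_def by auto
    have "pact W (p * q) (a \<oplus>\<^bsub>W\<^esub> b) = pact W q (pact W p a) \<oplus>\<^bsub>W\<^esub> pact W p (pact W q b)"
    proof -
      have "pact W (p * q) a = pact W q (pact W p a)" using a(1) by (simp add: W.pact_mult[symmetric] mult.commute)
      moreover have "pact W (p * q) b = pact W p (pact W q b)" using b(1) by (simp add: W.pact_mult)
      ultimately show ?thesis using W.pact_add_vec[OF a(1) b(1), of "p * q"] by argo
    qed
    also have "\<dots> = f (pact V q v \<oplus>\<^bsub>V\<^esub> pact V p w)" using a b ex ey by (simp add: lin hp)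
    finally have "pact W (p * q) (a \<oplus>\<^bsub>W\<^esub> b) = f (pact V q v \<oplus>\<^bsub>V\<^esub> pact V p w)" .
    then have "ext V W f (frac V (pact V q v \<oplus>\<^bsub>V\<^esub> pact V p w) (p * q)) = a \<oplus>\<^bsub>W\<^esub> b"
      using a b ex ey by (intro ext_char) auto
    then show ?thesis using ex ey a_def b_def by (simp add: V.F_add)
  qed
  have sm: "ext V W f (c \<odot>\<^bsub>Frat V\<^esub> X) = c \<odot>\<^bsub>W\<^esub> ext V W f X"
    if X: "X \<in> carrier (Frat V)" for X c
  proof -
    obtain v p where ex: "X = frac V v p" "v \<in> carrier V" "p \<noteq> 0" using X by (rule V.F_cases)
    have a: "ext V W f X \<in> carrier W" "pact W p (ext V W f X) = f v" using ext_ex[OF ex(2,3)] ex(1) by auto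
    have "ext V W f (frac V (c \<odot>\<^bsub>V\<^esub> v) p) = c \<odot>\<^bsub>W\<^esub> ext V W f X"
      by (rule ext_char) (use a ex in \<open>simp_all add: W.pact_smult_vec lin\<close>)
    then show ?thesis using ex by (simp add: V.F_smult)
  qed
  have ops: "ext V W f (Lm (Frat V) X) = Lm W (ext V W f X) \<and>
      ext V W f (Lz (Frat V) X) = Lz W (ext V W f X) \<and> ext V W f (Lp (Frat V) X) = Lp W (ext V W f X)"
    if X: "X \<in> carrier (Frat V)" for X
  proof -
    obtain v p where ex: "X = frac V v p" "v \<in> carrier V" "p \<noteq> 0" using X by (rule V.F_cases)
    have a: "ext V W f X \<in> carrier W" "pact W p (ext V W f X) = f v" using ext_ex[OF ex(2,3)] ex(1) by auto
    have "pact W (pcompose p [:-1, 1:]) (Lm W (ext V W f X)) = f (Lm V v)"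
      using a ex by (simp add: W.pact_Lm[symmetric] lin)
    moreover have "pact W (pcompose p [:1, 1:]) (Lp W (ext V W f X)) = f (Lp V v)"
      using a ex by (simp add: W.pact_Lp[symmetric] lin)
    moreover have "pact W p (Lz W (ext V W f X)) = f (Lz V v)"
      using a ex by (simp add: W.pact_Lz[symmetric] lin)
    ultimately have "ext V W f (frac V (Lm V v) (pcompose p [:-1, 1:])) = Lm W (ext V W f X)"
       "ext V W f (frac V (Lp V v) (pcompose p [:1, 1:])) = Lp W (ext V W f X)"
       "ext V W f (frac V (Lz V v) p) = Lz W (ext V W f X)"
      using a ex by (auto intro!: ext_char simp: pcomp_nz)
    then show ?thesis using ex by (simp add: V.F_Lm V.F_Lz V.F_Lp)
  qed
  show ?thesis unfolding sl2_hom_def lin_map_def using clo add sm ops by auto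
qed

lemma ext_eta: "v \<in> carrier V \<Longrightarrow> ext V W f (eta V v) = f v"
  unfolding eta_def by (rule ext_char) (simp_all add: cl)

lemma uniq:
  assumes h: "sl2_hom (Frat V) W h" and he: "\<forall>v\<in>carrier V. h (eta V v) = f v"
    and X: "X \<in> carrier (Frat V)"
  shows "h X = ext V W f X"
proof -
  obtain v p where ex: "X = frac V v p" "v \<in> carrier V" "p \<noteq> 0" using X by (rule V.F_cases)
  have "pact W p (h X) = h (pact (Frat V) p X)"
    using hom_pact[OF V.FF.sl2m_axioms W.sl2m_axioms h X] by simp
  also have "\<dots> = h (frac V v 1)"
  proof -
    have "frac V (pact V p v) p = frac V v 1" using ex by (simp add: V.frac_eq)
    then show ?thesis using ex by (simp add: V.F_pact)
  qed
  also have "\<dots> = f v" using he ex by (simp add: eta_def)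
  finally have "pact W p (h X) = f v" .
  moreover have "h X \<in> carrier W" using h X by (rule hom_closed)
  ultimately show ?thesis using ex by (simp add: ext_char)
qed

end


lemma tffr_tf: "tffr V \<Longrightarrow> tf V"
  unfolding tffr_def by (intro tf.intro sl2m.intro tf_axioms.intro) simp_all

lemma tffr_tfr: "tffr V \<Longrightarrow> tfr V"
  by (intro tfr.intro tffr_tf tfr_axioms.intro) (simp_all add: tffr_def)

lemma rational_tf: "rational W \<Longrightarrow> tf W"
  unfolding rational_def by (intro tffr_tf) simp

lemma tf2I: "tffr V \<Longrightarrow> tffr W \<Longrightarrow> tf2 V W"
  by (intro tf2.intro tffr_tf)

lemma part1: "tffr V \<Longrightarrow> rational (Frat V) \<and> sl2_hom V (Frat V) (eta V)"
proof -
  assume "tffr V"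
  then interpret tfr V by (rule tffr_tfr)
  show ?thesis using F_rational eta_hom by blast
qed

lemma part4:
  assumes "tffr V" "tffr V'" "tffr V''" "sl2_hom V V' f" "sl2_hom V' V'' g" "X \<in> carrier (Frat V)"
  shows "Fmor V V'' (g \<circ> f) X = Fmor V' V'' g (Fmor V V' f X)"
proof -
  interpret A: tf2 V V' using assms by (intro tf2I)
  interpret B: tf2 V' V'' using assms by (intro tf2I)
  interpret C: tf2 V V'' using assms by (intro tf2I)
  obtain v p where ex: "X = frac V v p" "v \<in> carrier V" "p \<noteq> 0" using assms(6) by (rule A.V.F_cases)
  have "f v \<in> carrier V'" using assms(4) ex(2) by (rule hom_closed)
  then show ?thesis using ex assms(4,5)
    by (simp add: A.Fmor_frac B.Fmor_frac C.Fmor_frac hom_comp)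
qed

lemma part6:
  assumes "tffr V" "rational W" "sl2_hom V W f"
  shows "(\<exists>g. sl2_hom (Frat V) W g \<and> (\<forall>v\<in>carrier V. g (eta V v) = f v)) \<and>
         (\<forall>g g'. sl2_hom (Frat V) W g \<and> (\<forall>v\<in>carrier V. g (eta V v) = f v) \<and>
                 sl2_hom (Frat V) W g' \<and> (\<forall>v\<in>carrier V. g' (eta V v) = f v) \<longrightarrow>
                 (\<forall>X\<in>carrier (Frat V). g X = g' X))"
proof -
  interpret tfrat V W f
    unfolding tfrat_def tfrat_axioms_def using assms tffr_tf rational_tf by blast
  show ?thesis using ext_hom ext_eta uniq by metis
qed

lemma c1: "\<forall>V :: 'a sl2mod. tffr V \<longrightarrow> rational (Frat V) \<and> sl2_hom V (Frat V) (eta V)"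
  using part1 by blast

lemma c2: "\<forall>(V :: 'a sl2mod) (V' :: 'b sl2mod) f. tffr V \<and> tffr V' \<and> sl2_hom V V' f \<longrightarrow>
         sl2_hom (Frat V) (Frat V') (Fmor V V' f)"
proof (intro allI impI)
  fix V :: "'a sl2mod" and V' :: "'b sl2mod" and f
  assume a: "tffr V \<and> tffr V' \<and> sl2_hom V V' f"
  then interpret tf2 V V' by (intro tf2I) auto
  show "sl2_hom (Frat V) (Frat V') (Fmor V V' f)" using a Fmor_hom by blast
qed

lemma c3: "\<forall>V :: 'a sl2mod. tffr V \<longrightarrow> (\<forall>X\<in>carrier (Frat V). Fmor V V id X = X)"
  using tffr_tf tf.Fmor_id by blast

lemma c4: "\<forall>(V :: 'a sl2mod) (V' :: 'b sl2mod) (V'' :: 'c sl2mod) f g.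
         tffr V \<and> tffr V' \<and> tffr V'' \<and> sl2_hom V V' f \<and> sl2_hom V' V'' g \<longrightarrow>
         (\<forall>X\<in>carrier (Frat V). Fmor V V'' (g \<circ> f) X = Fmor V' V'' g (Fmor V V' f X))"
  using part4 by blast

lemma c5: "\<forall>(V :: 'a sl2mod) (V' :: 'b sl2mod) f. tffr V \<and> tffr V' \<and> sl2_hom V V' f \<longrightarrow>
         (\<forall>v\<in>carrier V. Fmor V V' f (eta V v) = eta V' (f v))"
proof (intro allI impI ballI)
  fix V :: "'a sl2mod" and V' :: "'b sl2mod" and f v
  assume a: "tffr V \<and> tffr V' \<and> sl2_hom V V' f" and v: "v \<in> carrier V"
  then interpret tf2 V V' by (intro tf2I) auto
  show "Fmor V V' f (eta V v) = eta V' (f v)" using a v Fmor_eta by blast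
qed

lemma c6: "\<forall>(V :: 'a sl2mod) (W :: 'b sl2mod) f. tffr V \<and> rational W \<and> sl2_hom V W f \<longrightarrow>
         (\<exists>g. sl2_hom (Frat V) W g \<and> (\<forall>v\<in>carrier V. g (eta V v) = f v)) \<and>
         (\<forall>g g'. sl2_hom (Frat V) W g \<and> (\<forall>v\<in>carrier V. g (eta V v) = f v) \<and>
                 sl2_hom (Frat V) W g' \<and> (\<forall>v\<in>carrier V. g' (eta V v) = f v) \<longrightarrow>
                 (\<forall>X\<in>carrier (Frat V). g X = g' X))"
proof (intro allI impI)
  fix V :: "'a sl2mod" and W :: "'b sl2mod" and f
  assume "tffr V \<and> rational W \<and> sl2_hom V W f"
  then show "(\<exists>g. sl2_hom (Frat V) W g \<and> (\<forall>v\<in>carrier V. g (eta V v) = f v)) \<and>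
         (\<forall>g g'. sl2_hom (Frat V) W g \<and> (\<forall>v\<in>carrier V. g (eta V v) = f v) \<and>
                 sl2_hom (Frat V) W g' \<and> (\<forall>v\<in>carrier V. g' (eta V v) = f v) \<longrightarrow>
                 (\<forall>X\<in>carrier (Frat V). g X = g' X))" using part6 by blast
qed

lemma c7: "\<forall>(V :: 'a sl2mod) (V' :: 'b sl2mod) f g.
         tffr V \<and> tffr V' \<and> sl2_hom V V' f \<and> sl2_hom V V' g \<and>
         (\<forall>X\<in>carrier (Frat V). Fmor V V' f X = Fmor V V' g X) \<longrightarrow>
         (\<forall>v\<in>carrier V. f v = g v)"
proof (intro allI impI ballI)
  fix V :: "'a sl2mod" and V' :: "'b sl2mod" and f g v
  assume a: "tffr V \<and> tffr V' \<and> sl2_hom V V' f \<and> sl2_hom V V' g \<and>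
         (\<forall>X\<in>carrier (Frat V). Fmor V V' f X = Fmor V V' g X)" and v: "v \<in> carrier V"
  then interpret tf2 V V' by (intro tf2I) auto
  show "f v = g v" using a v faithful by blast
qed

theorem theorem7p7:
  shows
  "(\<forall>V :: 'a sl2mod. tffr V \<longrightarrow> rational (Frat V) \<and> sl2_hom V (Frat V) (eta V))
   \<and> (\<forall>(V :: 'a sl2mod) (V' :: 'b sl2mod) f. tffr V \<and> tffr V' \<and> sl2_hom V V' f \<longrightarrow>
         sl2_hom (Frat V) (Frat V') (Fmor V V' f))
   \<and> (\<forall>V :: 'a sl2mod. tffr V \<longrightarrow> (\<forall>X\<in>carrier (Frat V). Fmor V V id X = X))
   \<and> (\<forall>(V :: 'a sl2mod) (V' :: 'b sl2mod) (V'' :: 'c sl2mod) f g.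
         tffr V \<and> tffr V' \<and> tffr V'' \<and> sl2_hom V V' f \<and> sl2_hom V' V'' g \<longrightarrow>
         (\<forall>X\<in>carrier (Frat V). Fmor V V'' (g \<circ> f) X = Fmor V' V'' g (Fmor V V' f X)))
   \<and> (\<forall>(V :: 'a sl2mod) (V' :: 'b sl2mod) f. tffr V \<and> tffr V' \<and> sl2_hom V V' f \<longrightarrow>
         (\<forall>v\<in>carrier V. Fmor V V' f (eta V v) = eta V' (f v)))
   \<and> (\<forall>(V :: 'a sl2mod) (W :: 'b sl2mod) f. tffr V \<and> rational W \<and> sl2_hom V W f \<longrightarrow>
         (\<exists>g. sl2_hom (Frat V) W g \<and> (\<forall>v\<in>carrier V. g (eta V v) = f v)) \<and>
         (\<forall>g g'. sl2_hom (Frat V) W g \<and> (\<forall>v\<in>carrier V. g (eta V v) = f v) \<and>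
                 sl2_hom (Frat V) W g' \<and> (\<forall>v\<in>carrier V. g' (eta V v) = f v) \<longrightarrow>
                 (\<forall>X\<in>carrier (Frat V). g X = g' X)))
   \<and> (\<forall>(V :: 'a sl2mod) (V' :: 'b sl2mod) f g.
         tffr V \<and> tffr V' \<and> sl2_hom V V' f \<and> sl2_hom V V' g \<and>
         (\<forall>X\<in>carrier (Frat V). Fmor V V' f X = Fmor V V' g X) \<longrightarrow>
         (\<forall>v\<in>carrier V. f v = g v))"
  by (intro conjI c1 c2 c3 c4 c5 c6 c7)

end
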